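(* Let $\mathscr F$ be a universally separable class of functions $\Omega\to[0,1]$, $\varepsilon>0$ and $d\in\mathbb N$. The following are equivalent: (1) $\mathrm{fat}_\varepsilon(\mathscr F\,\mathrm{mod}\,\omega_1)\le d$; (2) there is a countable set $N\subseteq\Omega$ such that $\mathrm{fat}_\varepsilon(\mathscr F\restriction(\Omega\setminus N))\le d$.
   Context: $\mathscr F$ is universally separable if it has a countable subfamily $\mathscr F'$ such that every $f\in\mathscr F$ is a pointwise limit of a sequence from $\mathscr F'$. A finite $A\subseteq X$ is $\varepsilon$-fat shattered by $\mathscr F$ if there is $h:A\to[0,1]$ such that for every $B\subseteq A$ some $f_B\in\mathscr F$ has $f_B(a)>h(a)+\varepsilon$ for $a\in B$ and $f_B(a)<h(a)-\varepsilon$ for $a\in A\setminus B$; $\mathrm{fat}_\varepsilon(\mathscr F\restriction X)$ is the supremum of sizes of such $A\subseteq X$. $\mathrm{fat}_\varepsilon(\mathscr F\,\mathrm{mod}\,\omega_1)$ is the supremum of $n$ for which there exist uncountable $A_1,\dots,A_n\subseteq\Omega$ and $h:\{1,\dots,n\}\to[0,1]$ such that for every $J\subseteq\{1,\dots,n\}$ there is $f_J\in\mathscr F$ with $f_J(x)>h(i)+\varepsilon$ whenever $i\in J$, $x\in A_i$, and $f_J(x)<h(i)-\varepsilon$ whenever $i\notin J$, $x\in A_i$. *)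

theory Defs
  imports "HOL-Analysis.Analysis" "HOL-Library.Extended_Nat"
begin

text \<open>The ground set \<Omega> is the universe of the type 'a; a class of functions is a set
  of functions 'a \<Rightarrow> real.\<close>

definition universally_separable :: "('a \<Rightarrow> real) set \<Rightarrow> bool" where
  "universally_separable F \<longleftrightarrow>
     (\<exists>F'. F' \<subseteq> F \<and> countable F' \<and>
        (\<forall>f\<in>F. \<exists>s :: nat \<Rightarrow> 'a \<Rightarrow> real. (\<forall>n. s n \<in> F') \<and>
                   (\<forall>x. (\<lambda>n. s n x) \<longlonglongrightarrow> f x)))"

definition fat_shattered :: "('a \<Rightarrow> real) set \<Rightarrow> real \<Rightarrow> 'a set \<Rightarrow> bool" where
  "fat_shattered F \<epsilon> A \<longleftrightarrow> finite A \<and>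
     (\<exists>h :: 'a \<Rightarrow> real. (\<forall>a\<in>A. 0 \<le> h a \<and> h a \<le> 1) \<and>
        (\<forall>B\<subseteq>A. \<exists>f\<in>F. (\<forall>a\<in>B. f a > h a + \<epsilon>) \<and> (\<forall>a\<in>A - B. f a < h a - \<epsilon>)))"

definition fat_on :: "('a \<Rightarrow> real) set \<Rightarrow> real \<Rightarrow> 'a set \<Rightarrow> enat" where
  "fat_on F \<epsilon> X = Sup {enat (card A) | A. A \<subseteq> X \<and> fat_shattered F \<epsilon> A}"

definition fat_mod_omega1 :: "('a \<Rightarrow> real) set \<Rightarrow> real \<Rightarrow> enat" where
  "fat_mod_omega1 F \<epsilon> = Sup {enat n | n.
     \<exists>(A :: nat \<Rightarrow> 'a set) (h :: nat \<Rightarrow> real).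
       (\<forall>i\<in>{1..n}. uncountable (A i) \<and> 0 \<le> h i \<and> h i \<le> 1) \<and>
       (\<forall>J\<subseteq>{1..n}. \<exists>f\<in>F. \<forall>i\<in>{1..n}. \<forall>x\<in>A i.
          (i \<in> J \<longrightarrow> f x > h i + \<epsilon>) \<and> (i \<notin> J \<longrightarrow> f x < h i - \<epsilon>))}"

end

theory Submission
  imports Defs
begin

lemma dir2:
  fixes F :: "('a \<Rightarrow> real) set" and \<epsilon> :: real and d :: nat
  assumes eps: "\<epsilon> > 0" and cN: "countable N" and fo: "fat_on F \<epsilon> (UNIV - N) \<le> enat d"
  shows "fat_mod_omega1 F \<epsilon> \<le> enat d"
  unfolding fat_mod_omega1_def
proof (rule Sup_least, clarify)
  fix n and A :: "nat \<Rightarrow> 'a set" and h :: "nat \<Rightarrow> real"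
  assume H1: "\<forall>i\<in>{1..n}. uncountable (A i) \<and> 0 \<le> h i \<and> h i \<le> 1"
    and H2: "\<forall>J\<subseteq>{1..n}. \<exists>f\<in>F. \<forall>i\<in>{1..n}. \<forall>x\<in>A i.
          (i \<in> J \<longrightarrow> f x > h i + \<epsilon>) \<and> (i \<notin> J \<longrightarrow> f x < h i - \<epsilon>)"
  have disj: "A i \<inter> A j = {}" if "i \<in> {1..n}" "j \<in> {1..n}" "i \<noteq> j" for i j
  proof (rule ccontr)
    assume "A i \<inter> A j \<noteq> {}"
    then obtain x where x: "x \<in> A i" "x \<in> A j" by blast
    have "{i} \<subseteq> {1..n}" using that by simp
    from H2[rule_format, OF this] obtain f1 where f1: "\<forall>k\<in>{1..n}. \<forall>x\<in>A k.
          (k \<in> {i} \<longrightarrow> f1 x > h k + \<epsilon>) \<and> (k \<notin> {i} \<longrightarrow> f1 x < h k - \<epsilon>)"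
      by blast
    have "{j} \<subseteq> {1..n}" using that by simp
    from H2[rule_format, OF this] obtain f2 where f2: "\<forall>k\<in>{1..n}. \<forall>x\<in>A k.
          (k \<in> {j} \<longrightarrow> f2 x > h k + \<epsilon>) \<and> (k \<notin> {j} \<longrightarrow> f2 x < h k - \<epsilon>)"
      by blast
    have "f1 x > h i + \<epsilon>" "f1 x < h j - \<epsilon>" using f1 x that by auto
    moreover have "f2 x > h j + \<epsilon>" "f2 x < h i - \<epsilon>" using f2 x that by auto
    ultimately show False using eps by linarith
  qed
  define a where "a i = (SOME x. x \<in> A i - N)" for i
  have a: "a i \<in> A i - N" if "i \<in> {1..n}" for i
  proof -
    have "A i - N \<noteq> {}"
    proof
      assume "A i - N = {}"
      then have "A i \<subseteq> N" by blast
      then have "countable (A i)" using cN by (rule countable_subset)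
      then show False using H1 that by blast
    qed
    then show ?thesis unfolding a_def by (metis ex_in_conv someI_ex)
  qed
  have inj: "inj_on a {1..n}"
  proof (rule inj_onI)
    fix i j assume "i \<in> {1..n}" "j \<in> {1..n}" "a i = a j"
    note h = this
    show "i = j"
    proof (rule ccontr)
      assume "i \<noteq> j"
      then have "A i \<inter> A j = {}" using h disj by simp
      moreover have "a i \<in> A i" "a j \<in> A j" using a h(1,2) by auto
      ultimately show False using h(3) by auto
    qed
  qed
  define S where "S = a ` {1..n}"
  have cardS: "card S = n" unfolding S_def using inj by (simp add: card_image)
  have SN: "S \<subseteq> UNIV - N" unfolding S_def using a by blast
  define h' where "h' x = h (inv_into {1..n} a x)" for x
  have h'a: "h' (a i) = h i" if "i \<in> {1..n}" for i
    unfolding h'_def using inj that by simp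
  have "fat_shattered F \<epsilon> S"
    unfolding fat_shattered_def
  proof (intro conjI exI[of _ h'] ballI allI impI)
    show "finite S" unfolding S_def by simp
    fix x assume "x \<in> S"
    then obtain i where "i \<in> {1..n}" "x = a i" unfolding S_def by blast
    then show "0 \<le> h' x" "h' x \<le> 1" using h'a H1 by auto
  next
    fix B assume B: "B \<subseteq> S"
    define J where "J = {i\<in>{1..n}. a i \<in> B}"
    have "J \<subseteq> {1..n}" unfolding J_def by auto
    from H2[rule_format, OF this] obtain f where f: "f \<in> F" "\<forall>i\<in>{1..n}. \<forall>x\<in>A i.
          (i \<in> J \<longrightarrow> f x > h i + \<epsilon>) \<and> (i \<notin> J \<longrightarrow> f x < h i - \<epsilon>)"
      by blast
    show "\<exists>f\<in>F. (\<forall>a\<in>B. f a > h' a + \<epsilon>) \<and> (\<forall>a\<in>S - B. f a < h' a - \<epsilon>)"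
    proof (intro bexI[OF _ f(1)] conjI ballI)
      fix x assume "x \<in> B"
      then obtain i where i: "i \<in> {1..n}" "x = a i" using B unfolding S_def by blast
      then have "i \<in> J" using \<open>x \<in> B\<close> unfolding J_def by auto
      then show "f x > h' x + \<epsilon>" using f(2) i a[OF i(1)] h'a[OF i(1)] by auto
    next
      fix x assume "x \<in> S - B"
      then obtain i where i: "i \<in> {1..n}" "x = a i" "x \<notin> B" unfolding S_def by blast
      then have "i \<notin> J" unfolding J_def by auto
      then show "f x < h' x - \<epsilon>" using f(2) i a[OF i(1)] h'a[OF i(1)] by auto
    qed
  qed
  then have "enat (card S) \<le> fat_on F \<epsilon> (UNIV - N)"
    unfolding fat_on_def using SN by (intro Sup_upper) blast
  then have "enat (card S) \<le> enat d" using fo by (rule order_trans)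
  then show "enat n \<le> enat d" using cardS by simp
qed

lemma dir1:
  fixes F :: "('a \<Rightarrow> real) set" and \<epsilon> :: real and d :: nat
  assumes bnd: "\<forall>f\<in>F. \<forall>x. 0 \<le> f x \<and> f x \<le> 1" and us: "universally_separable F"
    and eps: "\<epsilon> > 0" and fm: "fat_mod_omega1 F \<epsilon> \<le> enat d"
  shows "\<exists>N. countable N \<and> fat_on F \<epsilon> (UNIV - N) \<le> enat d"
proof -
  obtain F' where F': "F' \<subseteq> F" "countable F'"
    "\<forall>f\<in>F. \<exists>s :: nat \<Rightarrow> 'a \<Rightarrow> real. (\<forall>n. s n \<in> F') \<and> (\<forall>x. (\<lambda>n. s n x) \<longlonglongrightarrow> f x)"
    using us unfolding universally_separable_def by blast
  define C :: "(nat \<times> (nat \<Rightarrow> real) \<times> (nat set \<Rightarrow> 'a \<Rightarrow> real)) set" where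
    "C = (SIGMA m:UNIV. (PiE {1..m} (\<lambda>_. \<rat>)) \<times> (PiE (Pow {1..m}) (\<lambda>_. F')))"
  have cC: "countable C" unfolding C_def using F'(2)
    by (intro countable_SIGMA countable_PiE) (auto simp: countable_rat)
  define AS where "AS c i = {x. \<forall>J\<subseteq>{1..fst c}. (i \<in> J \<longrightarrow> fst (snd c) i + \<epsilon> < snd (snd c) J x)
      \<and> (i \<notin> J \<longrightarrow> snd (snd c) J x < fst (snd c) i - \<epsilon>)}"
    for c :: "nat \<times> (nat \<Rightarrow> real) \<times> (nat set \<Rightarrow> 'a \<Rightarrow> real)" and i
  define N where "N = (\<Union>c\<in>C. \<Union>i. if countable (AS c i) then AS c i else {})"
  have cN: "countable N" unfolding N_def using cC by (intro countable_UN) auto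
  have NI: "x \<in> N" if "c \<in> C" "x \<in> AS c i" "countable (AS c i)" for c i x
    unfolding N_def using that by auto
  have "fat_on F \<epsilon> (UNIV - N) \<le> enat d"
    unfolding fat_on_def
  proof (rule Sup_least, clarify)
    fix A assume AN: "A \<subseteq> UNIV - N" and sh: "fat_shattered F \<epsilon> A"
    from sh obtain h where fin: "finite A" and h01: "\<forall>a\<in>A. 0 \<le> h a \<and> h a \<le> 1"
      and hs: "\<forall>B\<subseteq>A. \<exists>f\<in>F. (\<forall>a\<in>B. f a > h a + \<epsilon>) \<and> (\<forall>a\<in>A - B. f a < h a - \<epsilon>)"
      unfolding fat_shattered_def by blast
    define m where "m = card A"
    obtain e where e: "bij_betw e {1..m} A"
      using ex_bij_betw_nat_finite_1[OF fin] unfolding m_def by blast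
    have eA: "e i \<in> A" if "i \<in> {1..m}" for i using e that bij_betwE by blast
    have einj: "inj_on e {1..m}" using e bij_betw_imp_inj_on by blast
    have gex: "\<exists>g. g \<in> F' \<and> (\<forall>a\<in>B. g a > h a + \<epsilon>) \<and> (\<forall>a\<in>A - B. g a < h a - \<epsilon>)"
      if B: "B \<subseteq> A" for B
    proof -
      obtain f where f: "f \<in> F" "\<forall>a\<in>B. f a > h a + \<epsilon>" "\<forall>a\<in>A - B. f a < h a - \<epsilon>"
        using hs B by blast
      obtain s :: "nat \<Rightarrow> 'a \<Rightarrow> real" where s: "\<forall>n. s n \<in> F'" "\<forall>x. (\<lambda>n. s n x) \<longlonglongrightarrow> f x"
        using F'(3) f(1) by blast
      have "\<forall>a\<in>A. eventually (\<lambda>n. (a \<in> B \<longrightarrow> s n a > h a + \<epsilon>) \<and> (a \<notin> B \<longrightarrow> s n a < h a - \<epsilon>)) sequentially"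
      proof
        fix a assume aA: "a \<in> A"
        show "eventually (\<lambda>n. (a \<in> B \<longrightarrow> s n a > h a + \<epsilon>) \<and> (a \<notin> B \<longrightarrow> s n a < h a - \<epsilon>)) sequentially"
        proof (cases "a \<in> B")
          case True then have "h a + \<epsilon> < f a" using f by auto
          from order_tendstoD(1)[OF s(2)[rule_format, of a] this] show ?thesis
            using True by (auto elim: eventually_mono)
        next
          case False then have "f a < h a - \<epsilon>" using f aA by auto
          from order_tendstoD(2)[OF s(2)[rule_format, of a] this] show ?thesis
            using False by (auto elim: eventually_mono)
        qed
      qed
      from eventually_ball_finite[OF fin this] obtain M where
        "\<forall>n\<ge>M. \<forall>a\<in>A. (a \<in> B \<longrightarrow> s n a > h a + \<epsilon>) \<and> (a \<notin> B \<longrightarrow> s n a < h a - \<epsilon>)"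
        unfolding eventually_sequentially by blast
      then have "\<forall>a\<in>A. (a \<in> B \<longrightarrow> s M a > h a + \<epsilon>) \<and> (a \<notin> B \<longrightarrow> s M a < h a - \<epsilon>)" by blast
      then show ?thesis using s(1) B by (intro exI[of _ "s M"]) auto
    qed
    define g where "g B = (SOME g. g \<in> F' \<and> (\<forall>a\<in>B. g a > h a + \<epsilon>) \<and> (\<forall>a\<in>A - B. g a < h a - \<epsilon>))" for B
    have g: "g B \<in> F' \<and> (\<forall>a\<in>B. g B a > h a + \<epsilon>) \<and> (\<forall>a\<in>A - B. g B a < h a - \<epsilon>)" if "B \<subseteq> A" for B
      unfolding g_def by (rule someI_ex[OF gex[OF that]])
    have rex: "\<exists>r. r \<in> \<rat> \<and> (\<forall>B\<in>Pow A. (a \<in> B \<longrightarrow> g B a > r + \<epsilon>) \<and> (a \<notin> B \<longrightarrow> g B a < r - \<epsilon>))"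
      if aA: "a \<in> A" for a
    proof -
      have "\<forall>B\<in>Pow A. eventually (\<lambda>r. (a \<in> B \<longrightarrow> g B a > r + \<epsilon>) \<and> (a \<notin> B \<longrightarrow> g B a < r - \<epsilon>)) (nhds (h a))"
      proof
        fix B assume B: "B \<in> Pow A"
        show "eventually (\<lambda>r. (a \<in> B \<longrightarrow> g B a > r + \<epsilon>) \<and> (a \<notin> B \<longrightarrow> g B a < r - \<epsilon>)) (nhds (h a))"
        proof (cases "a \<in> B")
          case True then have "h a < g B a - \<epsilon>" using g[of B] B by auto
          from order_tendstoD(2)[OF filterlim_ident this] show ?thesis
            using True by (auto elim!: eventually_mono)
        next
          case False then have "g B a < h a - \<epsilon>" using g[of B] B aA by blast
          then have "g B a + \<epsilon> < h a" by linarith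
          from order_tendstoD(1)[OF filterlim_ident this] show ?thesis
            using False by (auto elim!: eventually_mono)
        qed
      qed
      from eventually_ball_finite[OF _ this] fin have
        "eventually (\<lambda>r. \<forall>B\<in>Pow A. (a \<in> B \<longrightarrow> g B a > r + \<epsilon>) \<and> (a \<notin> B \<longrightarrow> g B a < r - \<epsilon>)) (nhds (h a))"
        by auto
      then obtain \<delta> where \<delta>: "\<delta> > 0"
        "\<forall>r. dist r (h a) < \<delta> \<longrightarrow> (\<forall>B\<in>Pow A. (a \<in> B \<longrightarrow> g B a > r + \<epsilon>) \<and> (a \<notin> B \<longrightarrow> g B a < r - \<epsilon>))"
        unfolding eventually_nhds_metric by blast
      obtain r where r: "r \<in> \<rat>" "h a - \<delta> < r" "r < h a + \<delta>"
        using Rats_dense_in_real[of "h a - \<delta>" "h a + \<delta>"] \<delta>(1) by auto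
      have "dist r (h a) < \<delta>" using r by (auto simp: dist_real_def)
      then show ?thesis using \<delta>(2) r(1) by blast
    qed
    define q where "q a = (SOME r. r \<in> \<rat> \<and> (\<forall>B\<in>Pow A. (a \<in> B \<longrightarrow> g B a > r + \<epsilon>) \<and> (a \<notin> B \<longrightarrow> g B a < r - \<epsilon>)))" for a
    have q: "q a \<in> \<rat> \<and> (\<forall>B\<in>Pow A. (a \<in> B \<longrightarrow> g B a > q a + \<epsilon>) \<and> (a \<notin> B \<longrightarrow> g B a < q a - \<epsilon>))"
      if "a \<in> A" for a
      unfolding q_def by (rule someI_ex[OF rex[OF that]])
    define qq where "qq i = (if i \<in> {1..m} then q (e i) else undefined)" for i
    define gg where "gg J = (if J \<in> Pow {1..m} then g (e ` J) else undefined)" for J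
    define c where "c = (m, qq, gg)"
    have eJ: "e ` J \<subseteq> A" if "J \<subseteq> {1..m}" for J using eA that by blast
    have qqP: "qq \<in> PiE {1..m} (\<lambda>_. \<rat>)"
    proof (rule PiE_I)
      fix i assume "i \<in> {1..m}"
      then show "qq i \<in> \<rat>" unfolding qq_def using q[OF eA] by auto
    next
      fix i assume "i \<notin> {1..m}"
      then show "qq i = undefined" unfolding qq_def by auto
    qed
    have ggP: "gg \<in> PiE (Pow {1..m}) (\<lambda>_. F')"
    proof (rule PiE_I)
      fix J assume "J \<in> Pow {1..m}"
      then show "gg J \<in> F'" unfolding gg_def using g[OF eJ] by auto
    next
      fix J assume "J \<notin> Pow {1..m}"
      then show "gg J = undefined" unfolding gg_def by auto
    qed
    have cinC: "c \<in> C" unfolding C_def c_def using qqP ggP by simp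
    have inAS: "e i \<in> AS c i" if i: "i \<in> {1..m}" for i
      unfolding AS_def c_def
    proof (simp, intro allI impI conjI)
      fix J assume J: "J \<subseteq> {Suc 0..m}"
      have iff: "e i \<in> e ` J \<longleftrightarrow> i \<in> J" using einj J i by (auto simp: inj_on_eq_iff)
      have "e ` J \<in> Pow A" using eJ J by auto
      then have *: "(e i \<in> e ` J \<longrightarrow> g (e ` J) (e i) > q (e i) + \<epsilon>) \<and> (e i \<notin> e ` J \<longrightarrow> g (e ` J) (e i) < q (e i) - \<epsilon>)"
        using q[OF eA[OF i]] by blast
      show "i \<in> J \<Longrightarrow> qq i + \<epsilon> < gg J (e i)" using * iff J i unfolding qq_def gg_def by auto
      show "i \<notin> J \<Longrightarrow> gg J (e i) < qq i - \<epsilon>" using * iff J i unfolding qq_def gg_def by auto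
    qed
    have unc: "uncountable (AS c i)" if "i \<in> {1..m}" for i
      using NI[OF cinC inAS[OF that]] AN eA[OF that] by blast
    have qq01: "0 \<le> qq i \<and> qq i \<le> 1" if i: "i \<in> {1..m}" for i
    proof -
      have q2: "\<forall>B\<in>Pow A. (e i \<in> B \<longrightarrow> g B (e i) > q (e i) + \<epsilon>) \<and> (e i \<notin> B \<longrightarrow> g B (e i) < q (e i) - \<epsilon>)"
        using q[OF eA[OF i]] by blast
      have "g A (e i) > q (e i) + \<epsilon>" using q2 eA[OF i] by auto
      moreover have "g {} (e i) < q (e i) - \<epsilon>" using q2 by auto
      moreover have "g A \<in> F" "g {} \<in> F" using g[of A] g[of "{}"] F'(1) by auto
      moreover have "0 \<le> g {} (e i)" "g A (e i) \<le> 1" using bnd calculation(3,4) by auto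
      ultimately have "0 \<le> q (e i) \<and> q (e i) \<le> 1" using eps by linarith
      then show ?thesis unfolding qq_def using i by simp
    qed
    have "enat m \<le> fat_mod_omega1 F \<epsilon>"
      unfolding fat_mod_omega1_def
    proof (rule Sup_upper, rule CollectI, rule exI[of _ m], rule conjI[OF refl],
        rule exI[of _ "AS c"], rule exI[of _ qq], intro conjI ballI allI impI)
      fix i assume "i \<in> {1..m}"
      then show "uncountable (AS c i)" "0 \<le> qq i" "qq i \<le> 1" using unc qq01 by auto
    next
      fix J assume J: "J \<subseteq> {1..m}"
      have "gg J \<in> F" unfolding gg_def using g[OF eJ[OF J]] J F'(1) by auto
      moreover have "\<forall>i\<in>{1..m}. \<forall>x\<in>AS c i. (i \<in> J \<longrightarrow> gg J x > qq i + \<epsilon>) \<and> (i \<notin> J \<longrightarrow> gg J x < qq i - \<epsilon>)"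
        using J unfolding AS_def c_def by auto
      ultimately show "\<exists>f\<in>F. \<forall>i\<in>{1..m}. \<forall>x\<in>AS c i. (i \<in> J \<longrightarrow> f x > qq i + \<epsilon>) \<and> (i \<notin> J \<longrightarrow> f x < qq i - \<epsilon>)"
        by blast
    qed
    then show "enat (card A) \<le> enat d" using order_trans[OF _ fm] unfolding m_def by blast
  qed
  with cN show ?thesis by blast
qed

theorem mainTheorem14:
  fixes F :: "('a \<Rightarrow> real) set" and \<epsilon> :: real and d :: nat
  assumes "\<forall>f\<in>F. \<forall>x. 0 \<le> f x \<and> f x \<le> 1"
    and "universally_separable F"
    and "\<epsilon> > 0"
  shows "fat_mod_omega1 F \<epsilon> \<le> enat d \<longleftrightarrow>
         (\<exists>N. countable N \<and> fat_on F \<epsilon> (UNIV - N) \<le> enat d)"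
  using dir1[OF assms] dir2[OF assms(3)] by blast

end
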